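(* Let $\mathcal{M}=(M,\mathcal{A}_M)$ be a $\mathbb{Z}_2^n$-supermanifold, $m\in M$, and let $(x,\xi)=(x^1,\dots,x^p,\xi^1,\dots,\xi^q)$ be a $\mathbb{Z}_2^n$-chart centered at $m$ (so $m$ corresponds to $x=0$), over a convex open set, identifying $\mathcal{A}_m$ with the stalk at $0$ of the local model. Then for every $k\ge0$, $$\mathfrak{m}_m^{k+1}=\Big\{[f]_0:\ f(x,\xi)=\sum_{0\le|\mu|\le k}g_\mu(x)\xi^\mu+\sum_{|\mu|>k}f_\mu(x)\xi^\mu\Big\},$$ where each $g_\mu$ ($|\mu|\le k$) is a smooth function vanishing to order $k-|\mu|+1$ at $x=0$ (i.e. $g_\mu(x)=O(|x|^{k-|\mu|+1})$; all its partial derivatives of order $\le k-|\mu|$ vanish at $0$) and the $f_\mu$ ($|\mu|>k$) are arbitrary smooth functions. In particular these sets form the basis of neighbourhoods of $0$ in the $\mathfrak{m}_m$-adic topology of $\mathcal{A}_m$.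
   Context: $\langle a,b\rangle=\sum_ia_ib_i\pmod2$ on $\mathbb{Z}_2^n$. A $\mathbb{Z}_2^n$-supermanifold of dimension $p|\mathbf q$ is a pair $(M,\mathcal{A}_M)$ of a Hausdorff second countable space and a sheaf of $\mathbb{Z}_2^n$-graded associative unital $\mathbb{R}$-algebras with $ab=(-1)^{\langle\deg a,\deg b\rangle}ba$, whose stalks have a unique maximal homogeneous ideal, locally isomorphic to $(\mathbb{R}^p,C^\infty_{\mathbb{R}^p}[[\xi^1,\dots,\xi^q]])$, whose sections are formal power series $\sum_\mu f_\mu(x)\xi^\mu$ with smooth coefficients in $\mathbb{Z}_2^n$-commuting formal variables $\xi^a$ of nonzero degrees ($q_k$ of the $k$-th nonzero degree); $\xi^\mu=(\xi^1)^{\mu_1}\cdots(\xi^q)^{\mu_q}$, $|\mu|=\sum\mu_a$. $\mathfrak{m}_m$ is the unique maximal homogeneous ideal of the stalk $\mathcal{A}_m$ (the germs whose independent term vanishes at $m$). *)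

theory Defs
  imports "HOL-Analysis.Analysis" "HOL-Library.Landau_Symbols"
begin

fun Ck_on :: "nat \<Rightarrow> 'a::euclidean_space set \<Rightarrow> ('a \<Rightarrow> real) \<Rightarrow> bool" where
  "Ck_on 0 U f = continuous_on U f"
| "Ck_on (Suc k) U f =
     (f differentiable_on U \<and>
      (\<forall>v\<in>Basis. Ck_on k U (\<lambda>x. frechet_derivative f (at x) v)))"

definition smooth_on :: "'a::euclidean_space set \<Rightarrow> ('a \<Rightarrow> real) \<Rightarrow> bool" where
  "smooth_on U f \<longleftrightarrow> (\<forall>k. Ck_on k U f)"

text \<open>Elements of Z_2^n are encoded as functions nat \<Rightarrow> bool (only the entries i < n matter);
  the pairing is  <a,b> = sum_i a_i b_i  (mod 2).  The formal variables are \<xi>^a, a < q, with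
  degrees dg a.  A multi-index is mu :: nat \<Rightarrow> nat (entries a \<ge> q are 0).\<close>

definition pairing :: "nat \<Rightarrow> (nat \<Rightarrow> bool) \<Rightarrow> (nat \<Rightarrow> bool) \<Rightarrow> nat" where
  "pairing n a b = card {i. i < n \<and> a i \<and> b i}"

text \<open>A variable is "odd" (self-pairing 1), hence squares to zero.  Admissible multi-indices
  index the monomials \<xi>^mu that are nonzero.\<close>
definition admissible :: "nat \<Rightarrow> nat \<Rightarrow> (nat \<Rightarrow> nat \<Rightarrow> bool) \<Rightarrow> (nat \<Rightarrow> nat) \<Rightarrow> bool" where
  "admissible n q dg mu \<longleftrightarrow>
     (\<forall>a. q \<le> a \<longrightarrow> mu a = 0) \<and>
     (\<forall>a<q. odd (pairing n (dg a) (dg a)) \<longrightarrow> mu a \<le> 1)"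

definition mi_size :: "nat \<Rightarrow> (nat \<Rightarrow> nat) \<Rightarrow> nat" where
  "mi_size q mu = (\<Sum>a<q. mu a)"

text \<open>Sign in  \<xi>^mu \<xi>^nu = sgn \<xi>^(mu+nu) (reordering to normal order).\<close>
definition mono_sign :: "nat \<Rightarrow> nat \<Rightarrow> (nat \<Rightarrow> nat \<Rightarrow> bool) \<Rightarrow> (nat \<Rightarrow> nat) \<Rightarrow> (nat \<Rightarrow> nat) \<Rightarrow> real" where
  "mono_sign n q dg mu nu =
     (-1) ^ (\<Sum>a<q. \<Sum>b<a. mu a * nu b * pairing n (dg a) (dg b))"

type_synonym 'a series = "(nat \<Rightarrow> nat) \<Rightarrow> 'a \<Rightarrow> real"

definition is_section :: "nat \<Rightarrow> nat \<Rightarrow> (nat \<Rightarrow> nat \<Rightarrow> bool) \<Rightarrow> 'a::euclidean_space set \<Rightarrow> 'a series \<Rightarrow> bool" where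
  "is_section n q dg W F \<longleftrightarrow>
     (\<forall>mu. smooth_on W (F mu)) \<and> (\<forall>mu. \<not> admissible n q dg mu \<longrightarrow> F mu = (\<lambda>_. 0))"

definition s_zero :: "'a series" where
  "s_zero = (\<lambda>mu x. 0)"

definition s_one :: "'a series" where
  "s_one = (\<lambda>mu x. if mu = (\<lambda>_. 0) then 1 else 0)"

definition s_add :: "'a series \<Rightarrow> 'a series \<Rightarrow> 'a series" where
  "s_add F G = (\<lambda>mu x. F mu x + G mu x)"

definition s_mult :: "nat \<Rightarrow> nat \<Rightarrow> (nat \<Rightarrow> nat \<Rightarrow> bool) \<Rightarrow> 'a series \<Rightarrow> 'a series \<Rightarrow> 'a series" where
  "s_mult n q dg F G = (\<lambda>lam x.
     if admissible n q dg lam then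
       (\<Sum>mu\<in>{mu. \<forall>a. mu a \<le> lam a}.
          mono_sign n q dg mu (\<lambda>a. lam a - mu a) * F mu x * G (\<lambda>a. lam a - mu a) x)
     else 0)"

definition s_prod_list :: "nat \<Rightarrow> nat \<Rightarrow> (nat \<Rightarrow> nat \<Rightarrow> bool) \<Rightarrow> 'a series list \<Rightarrow> 'a series" where
  "s_prod_list n q dg l = foldr (s_mult n q dg) l s_one"

definition s_sum_list :: "'a series list \<Rightarrow> 'a series" where
  "s_sum_list l = foldr s_add l s_zero"

definition in_max_ideal :: "'a::euclidean_space series \<Rightarrow> bool" where
  "in_max_ideal F \<longleftrightarrow> F (\<lambda>_. 0) 0 = 0"

definition in_max_ideal_pow :: "nat \<Rightarrow> nat \<Rightarrow> (nat \<Rightarrow> nat \<Rightarrow> bool) \<Rightarrow> nat \<Rightarrow> 'a::euclidean_space series \<Rightarrow> bool" where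
  "in_max_ideal_pow n q dg k F \<longleftrightarrow>
     (\<exists>W L. open W \<and> 0 \<in> W \<and>
        (\<forall>l\<in>set L. length l = Suc k \<and> (\<forall>G\<in>set l. is_section n q dg W G \<and> in_max_ideal G)) \<and>
        (\<forall>mu. \<forall>x\<in>W. F mu x = s_sum_list (map (s_prod_list n q dg) L) mu x))"

end

theory Submission
  imports Defs
begin


lemma frechet_derivative_open_cong:
  assumes "open U" "x \<in> U" "\<forall>y\<in>U. f y = g y"
  shows "frechet_derivative f (at x) = frechet_derivative g (at x)"
proof -
  have "(f has_derivative D) (at x) \<longleftrightarrow> (g has_derivative D) (at x)" for D
    using assms has_derivative_transform_within_open[of f D x UNIV U g]
      has_derivative_transform_within_open[of g D x UNIV U f] by auto
  then show ?thesis unfolding frechet_derivative_def by simp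
qed

lemma Ck_on_open_cong:
  assumes "open U" "\<forall>x\<in>U. f x = g x"
  shows "Ck_on k U f = Ck_on k U g"
  using assms(2)
proof (induction k arbitrary: f g)
  case 0
  then show ?case using continuous_on_cong by force
next
  case (Suc k)
  have d: "f differentiable_on U \<longleftrightarrow> g differentiable_on U"
  proof -
    have "(f has_derivative D) (at x) \<longleftrightarrow> (g has_derivative D) (at x)" if "x \<in> U" for D x
      using assms(1) Suc.prems that has_derivative_transform_within_open[of f D x UNIV U g]
        has_derivative_transform_within_open[of g D x UNIV U f] by auto
    then show ?thesis unfolding differentiable_on_def differentiable_def
      using at_within_open[OF _ assms(1)] by metis
  qed
  have "Ck_on k U (\<lambda>x. frechet_derivative f (at x) v) = Ck_on k U (\<lambda>x. frechet_derivative g (at x) v)" for v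
    using Suc.IH[of "\<lambda>x. frechet_derivative f (at x) v" "\<lambda>x. frechet_derivative g (at x) v"]
      frechet_derivative_open_cong[OF assms(1) _ Suc.prems] by auto
  then show ?case using d by simp
qed

lemma Ck_on_Suc_imp: "Ck_on (Suc k) U f \<Longrightarrow> Ck_on k U f"
proof (induction k arbitrary: f)
  case 0
  then show ?case by (simp add: differentiable_imp_continuous_on)
next
  case (Suc k)
  then show ?case by auto
qed

lemma Ck_on_mono: "m \<le> k \<Longrightarrow> Ck_on k U f \<Longrightarrow> Ck_on m U f"
proof (induction k rule: dec_induct)
  case (step n)
  then show ?case using Ck_on_Suc_imp by blast
qed simp

lemma fd_works:
  assumes "open U" "f differentiable_on U" "x \<in> U"
  shows "(f has_derivative frechet_derivative f (at x)) (at x)"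
  using assms unfolding differentiable_on_def
  by (metis at_within_open frechet_derivative_works)

lemma Ck_on_const: "Ck_on k U (\<lambda>x. c)"
proof (induction k arbitrary: c)
  case (Suc k)
  have "frechet_derivative (\<lambda>x. c) (at x) = (\<lambda>h. 0)" for x :: 'a
    by (metis frechet_derivative_at has_derivative_const)
  then show ?case using Suc by simp
qed simp

lemma Ck_on_add:
  assumes "open U" "Ck_on k U f" "Ck_on k U g"
  shows "Ck_on k U (\<lambda>x. f x + g x)"
  using assms(2,3)
proof (induction k arbitrary: f g)
  case 0
  then show ?case by (simp add: continuous_on_add)
next
  case (Suc k)
  have df: "f differentiable_on U" and dg: "g differentiable_on U" using Suc.prems by auto
  have deq: "frechet_derivative (\<lambda>x. f x + g x) (at x) v
        = frechet_derivative f (at x) v + frechet_derivative g (at x) v" if "x \<in> U" for x v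
  proof -
    have "((\<lambda>x. f x + g x) has_derivative (\<lambda>h. frechet_derivative f (at x) h + frechet_derivative g (at x) h)) (at x)"
      by (rule has_derivative_add[OF fd_works[OF assms(1) df that] fd_works[OF assms(1) dg that]])
    from frechet_derivative_at[OF this] show ?thesis by metis
  qed
  then have "Ck_on k U (\<lambda>x. frechet_derivative (\<lambda>x. f x + g x) (at x) v)" if "v \<in> Basis" for v
  proof -
    have "Ck_on k U (\<lambda>x. frechet_derivative f (at x) v + frechet_derivative g (at x) v)"
      using Suc.IH[of "\<lambda>x. frechet_derivative f (at x) v" "\<lambda>x. frechet_derivative g (at x) v"]
        Suc.prems that by auto
    moreover have "Ck_on k U (\<lambda>x. frechet_derivative (\<lambda>x. f x + g x) (at x) v) =
       Ck_on k U (\<lambda>x. frechet_derivative f (at x) v + frechet_derivative g (at x) v)"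
      by (rule Ck_on_open_cong[OF assms(1)]) (use deq in auto)
    ultimately show ?thesis by simp
  qed
  moreover have "(\<lambda>x. f x + g x) differentiable_on U"
    using df dg by (simp add: differentiable_on_add)
  ultimately show ?case by simp
qed

lemma Ck_on_sum:
  assumes "open U" "finite A" "\<And>i. i \<in> A \<Longrightarrow> Ck_on k U (f i)"
  shows "Ck_on k U (\<lambda>x. \<Sum>i\<in>A. f i x)"
  using assms(2,3)
proof (induction A rule: finite_induct)
  case empty
  then show ?case using Ck_on_const[of k U 0] by simp
next
  case (insert a A)
  then show ?case using Ck_on_add[OF assms(1), of k "f a" "\<lambda>x. \<Sum>i\<in>A. f i x"] by simp
qed

lemma Ck_on_mult:
  assumes "open U" "Ck_on k U f" "Ck_on k U g"
  shows "Ck_on k U (\<lambda>x. f x * g x)"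
  using assms(2,3)
proof (induction k arbitrary: f g)
  case 0
  then show ?case by (simp add: continuous_on_mult)
next
  case (Suc k)
  have df: "f differentiable_on U" and dg: "g differentiable_on U" using Suc.prems by auto
  have deq: "frechet_derivative (\<lambda>x. f x * g x) (at x) v
        = f x * frechet_derivative g (at x) v + frechet_derivative f (at x) v * g x" if "x \<in> U" for x v
  proof -
    have "((\<lambda>x. f x * g x) has_derivative (\<lambda>h. f x * frechet_derivative g (at x) h + frechet_derivative f (at x) h * g x)) (at x)"
      by (rule has_derivative_mult[OF fd_works[OF assms(1) df that] fd_works[OF assms(1) dg that]])
    from frechet_derivative_at[OF this] show ?thesis by metis
  qed
  then have "Ck_on k U (\<lambda>x. frechet_derivative (\<lambda>x. f x * g x) (at x) v)" if "v \<in> Basis" for v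
  proof -
    have fk: "Ck_on k U f" using Ck_on_Suc_imp[of k U f] Suc.prems by blast
    have gk: "Ck_on k U g" using Ck_on_Suc_imp[of k U g] Suc.prems by blast
    have a: "Ck_on k U (\<lambda>x. f x * frechet_derivative g (at x) v)"
      using Suc.IH[OF fk] Suc.prems that by auto
    have b: "Ck_on k U (\<lambda>x. frechet_derivative f (at x) v * g x)"
      using Suc.IH[OF _ gk] Suc.prems that by auto
    have "Ck_on k U (\<lambda>x. frechet_derivative (\<lambda>x. f x * g x) (at x) v) =
       Ck_on k U (\<lambda>x. f x * frechet_derivative g (at x) v + frechet_derivative f (at x) v * g x)"
      by (rule Ck_on_open_cong[OF assms(1)]) (use deq in auto)
    then show ?thesis using Ck_on_add[OF assms(1) a b] by simp
  qed
  moreover have "(\<lambda>x. f x * g x) differentiable_on U"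
    using df dg by (simp add: differentiable_on_mult)
  ultimately show ?case by simp
qed

lemma Ck_on_inner: "Ck_on k U (\<lambda>x. x \<bullet> (i::'a::euclidean_space))"
proof (cases k)
  case (Suc m)
  have "frechet_derivative (\<lambda>x. x \<bullet> i) (at x) = (\<lambda>h. h \<bullet> i)" for x
    by (metis frechet_derivative_at bounded_linear_inner_left bounded_linear_imp_has_derivative)
  then show ?thesis using Suc by (simp add: Ck_on_const differentiable_on_def bounded_linear_inner_left
        bounded_linear_imp_differentiable)
qed (simp add: continuous_on_inner continuous_on_id)

lemma Ck_on_subset:
  assumes "open V" "V \<subseteq> U" "Ck_on k U f"
  shows "Ck_on k V f"
  using assms(3)
  by (induction k arbitrary: f) (auto intro: continuous_on_subset[OF _ assms(2)] differentiable_on_subset[OF _ assms(2)])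

lemma smooth_on_subset: "open V \<Longrightarrow> V \<subseteq> U \<Longrightarrow> smooth_on U f \<Longrightarrow> smooth_on V f"
  unfolding smooth_on_def using Ck_on_subset by blast

lemma smooth_on_cong: "open U \<Longrightarrow> \<forall>x\<in>U. f x = g x \<Longrightarrow> smooth_on U f = smooth_on U g"
  unfolding smooth_on_def using Ck_on_open_cong by blast

lemma smooth_on_const: "smooth_on U (\<lambda>x. c)"
  unfolding smooth_on_def by (simp add: Ck_on_const)

lemma smooth_on_inner: "smooth_on U (\<lambda>x. x \<bullet> i)"
  unfolding smooth_on_def by (simp add: Ck_on_inner)

lemma smooth_on_add: "open U \<Longrightarrow> smooth_on U f \<Longrightarrow> smooth_on U g \<Longrightarrow> smooth_on U (\<lambda>x. f x + g x)"
  unfolding smooth_on_def by (simp add: Ck_on_add)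

lemma smooth_on_mult: "open U \<Longrightarrow> smooth_on U f \<Longrightarrow> smooth_on U g \<Longrightarrow> smooth_on U (\<lambda>x. f x * g x)"
  unfolding smooth_on_def by (simp add: Ck_on_mult)

lemma smooth_on_sum: "open U \<Longrightarrow> finite A \<Longrightarrow> (\<And>i. i \<in> A \<Longrightarrow> smooth_on U (f i)) \<Longrightarrow> smooth_on U (\<lambda>x. \<Sum>i\<in>A. f i x)"
  unfolding smooth_on_def by (simp add: Ck_on_sum)

lemma smooth_on_continuous: "smooth_on U f \<Longrightarrow> continuous_on U f"
  unfolding smooth_on_def using Ck_on.simps(1) by blast

lemma smooth_on_differentiable: "smooth_on U f \<Longrightarrow> f differentiable_on U"
  unfolding smooth_on_def using Ck_on.simps(2) by blast

lemma smooth_on_deriv: "smooth_on U f \<Longrightarrow> v \<in> Basis \<Longrightarrow> smooth_on U (\<lambda>x. frechet_derivative f (at x) v)"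
  unfolding smooth_on_def using Ck_on.simps(2) by blast



definition Dbl :: "('a::euclidean_space \<Rightarrow> real) \<Rightarrow> 'a \<Rightarrow> 'a \<Rightarrow>\<^sub>L real" where
  "Dbl \<phi> y = (\<Sum>v\<in>Basis. frechet_derivative \<phi> (at y) v *\<^sub>R blinfun_inner_left v)"

lemma Dbl_apply:
  assumes "\<phi> differentiable (at y)"
  shows "blinfun_apply (Dbl \<phi> y) h = frechet_derivative \<phi> (at y) h"
proof -
  have lin: "linear (frechet_derivative \<phi> (at y))"
    using assms frechet_derivative_works has_derivative_linear by blast
  have "blinfun_apply (Dbl \<phi> y) h = (\<Sum>v\<in>Basis. frechet_derivative \<phi> (at y) v * (h \<bullet> v))"
    unfolding Dbl_def by (simp add: blinfun.sum_left blinfun.scaleR_left)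
  also have "\<dots> = frechet_derivative \<phi> (at y) h \<bullet> 1"
    using Linear_Algebra.linear_componentwise[OF lin, of h 1] by (simp add: mult.commute)
  finally show ?thesis by simp
qed

lemma continuous_on_Dbl:
  assumes "\<And>v. v \<in> Basis \<Longrightarrow> continuous_on S (\<lambda>y. frechet_derivative \<phi> (at y) v)"
  shows "continuous_on S (Dbl \<phi>)"
  unfolding Dbl_def
  by (intro continuous_on_sum continuous_on_scaleR continuous_on_const assms)

definition Gi :: "nat \<Rightarrow> ('a::euclidean_space \<Rightarrow> real) \<Rightarrow> 'a \<Rightarrow> real" where
  "Gi j \<phi> x = integral {0..1} (\<lambda>t. t ^ j * \<phi> (t *\<^sub>R x))"

locale starU =
  fixes U :: "'a::euclidean_space set"
  assumes U_open: "open U" and U_convex: "convex U" and U_0: "0 \<in> U"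
begin

lemma seg: "x \<in> U \<Longrightarrow> t \<in> {0..1} \<Longrightarrow> t *\<^sub>R x \<in> U"
proof -
  assume x: "x \<in> U" and t: "t \<in> {0..1}"
  have "(1 - t) *\<^sub>R 0 + t *\<^sub>R x \<in> U"
    by (rule convexD[OF U_convex U_0 x]) (use t in auto)
  then show "t *\<^sub>R x \<in> U" by simp
qed

lemma cont_param:
  assumes "continuous_on U \<phi>"
  shows "continuous_on (U \<times> {0..1}) (\<lambda>(x, t). t ^ j * \<phi> (t *\<^sub>R x))"
proof -
  have "continuous_on (U \<times> {0..1}) (\<lambda>p. \<phi> (snd p *\<^sub>R fst p))"
    by (rule continuous_on_compose2[OF assms]) (auto intro!: continuous_intros simp: seg)
  then show ?thesis unfolding case_prod_beta
    by (intro continuous_intros) auto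
qed

lemma Gi_Ck: "Ck_on k U \<phi> \<Longrightarrow> Ck_on k U (Gi j \<phi>)"
proof (induction k arbitrary: j \<phi>)
  case 0
  then have c: "continuous_on U \<phi>" by simp
  have "continuous_on U (\<lambda>x. integral (cbox 0 1) (\<lambda>t. t ^ j * \<phi> (t *\<^sub>R x)))"
    by (rule integral_continuous_on_param) (use cont_param[OF c] in \<open>simp add: cbox_interval\<close>)
  then show ?case by (simp add: Gi_def cbox_interval)
next
  case (Suc k)
  have dphi: "\<phi> differentiable_on U" and pk: "\<And>v. v \<in> Basis \<Longrightarrow> Ck_on k U (\<lambda>x. frechet_derivative \<phi> (at x) v)"
    using Suc.prems by auto
  have pc: "\<And>v. v \<in> Basis \<Longrightarrow> continuous_on U (\<lambda>x. frechet_derivative \<phi> (at x) v)"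
    using pk Ck_on_mono[of 0 k] by fastforce
  have dat: "\<phi> differentiable (at y)" if "y \<in> U" for y
    using dphi that U_open by (simp add: differentiable_on_eq_differentiable_at)
  define fx where "fx x t = (t ^ (Suc j)) *\<^sub>R Dbl \<phi> (t *\<^sub>R x)" for x t
  have der: "((\<lambda>x. t ^ j * \<phi> (t *\<^sub>R x)) has_derivative blinfun_apply (fx x t)) (at x within U)"
    if "x \<in> U" "t \<in> cbox 0 1" for x t
  proof -
    have tx: "t *\<^sub>R x \<in> U" using seg that by (simp add: cbox_interval)
    have dpa: "(\<phi> has_derivative frechet_derivative \<phi> (at (t *\<^sub>R x))) (at (t *\<^sub>R x))"
      using dat[OF tx] frechet_derivative_works by blast
    then have "((\<lambda>x. \<phi> (t *\<^sub>R x)) has_derivative (\<lambda>h. frechet_derivative \<phi> (at (t *\<^sub>R x)) (t *\<^sub>R h))) (at x)"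
    proof -
      have hs: "((\<lambda>x. t *\<^sub>R x) has_derivative (\<lambda>h. t *\<^sub>R h)) (at x)"
        by (rule has_derivative_scaleR_right[OF has_derivative_ident])
      from has_derivative_compose[OF hs dpa] show ?thesis .
    qed
    then have "((\<lambda>x. t ^ j * \<phi> (t *\<^sub>R x)) has_derivative (\<lambda>h. t ^ j * frechet_derivative \<phi> (at (t *\<^sub>R x)) (t *\<^sub>R h))) (at x)"
      by (rule has_derivative_mult_right)
    moreover have "blinfun_apply (fx x t) = (\<lambda>h. t ^ j * frechet_derivative \<phi> (at (t *\<^sub>R x)) (t *\<^sub>R h))"
    proof
      fix h
      have lin: "linear (frechet_derivative \<phi> (at (t *\<^sub>R x)))"
        using dat[OF tx] frechet_derivative_works has_derivative_linear by blast
      show "blinfun_apply (fx x t) h = t ^ j * frechet_derivative \<phi> (at (t *\<^sub>R x)) (t *\<^sub>R h)"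
        unfolding fx_def using Dbl_apply[OF dat[OF tx]] linear_scale[OF lin]
        by (simp add: blinfun.scaleR_left)
    qed
    ultimately show ?thesis by (simp add: has_derivative_at_withinI)
  qed
  have integ: "(\<lambda>t. t ^ j * \<phi> (t *\<^sub>R x)) integrable_on cbox 0 1" if "x \<in> U" for x
  proof -
    have "continuous_on {0..1} (\<lambda>t. t ^ j * \<phi> (t *\<^sub>R x))"
    proof -
      have c0: "continuous_on U \<phi>" using Ck_on_mono[of 0 "Suc k" U \<phi>] Suc.prems by simp
      show ?thesis
        by (rule continuous_on_compose2[OF cont_param[OF c0, of j], where f="\<lambda>t. (x, t)", simplified])
          (auto intro!: continuous_intros simp: that)
    qed
    then show ?thesis by (simp add: cbox_interval integrable_continuous_real)
  qed
  have cfx: "continuous_on (U \<times> cbox 0 1) (\<lambda>(x, t). fx x t)"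
  proof -
    have "continuous_on (U \<times> {0..1}) (\<lambda>p. Dbl \<phi> (snd p *\<^sub>R fst p))"
      by (rule continuous_on_compose2[OF continuous_on_Dbl[OF pc]]) (auto intro!: continuous_intros simp: seg)
    then show ?thesis unfolding fx_def case_prod_beta cbox_interval
      by (intro continuous_intros) auto
  qed
  have hd: "(Gi j \<phi> has_derivative blinfun_apply (integral (cbox 0 1) (fx x0))) (at x0)" if "x0 \<in> U" for x0
  proof -
    have "((\<lambda>x. integral (cbox 0 1) (\<lambda>t. t ^ j * \<phi> (t *\<^sub>R x))) has_derivative blinfun_apply (integral (cbox 0 1) (fx x0))) (at x0 within U)"
      by (rule leibniz_rule[OF der integ cfx that U_convex])
    then show ?thesis using at_within_open[OF that U_open]
      by (simp add: Gi_def[abs_def] cbox_interval)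
  qed
  have fdG: "frechet_derivative (Gi j \<phi>) (at x0) v = Gi (Suc j) (\<lambda>y. frechet_derivative \<phi> (at y) v) x0"
    if "x0 \<in> U" for x0 v
  proof -
    have "frechet_derivative (Gi j \<phi>) (at x0) v = blinfun_apply (integral (cbox 0 1) (fx x0)) v"
      using frechet_derivative_at[OF hd[OF that]] by simp
    also have "\<dots> = integral (cbox 0 1) (\<lambda>t. blinfun_apply (fx x0 t) v)"
    proof (rule blinfun_apply_integral)
      have "continuous_on (cbox 0 1) (fx x0)"
        by (rule continuous_on_compose2[OF cfx, where f="\<lambda>t. (x0, t)", simplified])
          (auto intro!: continuous_intros simp: that)
      then show "fx x0 integrable_on cbox 0 1" by (rule integrable_continuous)
    qed
    also have "\<dots> = integral {0..1} (\<lambda>t. t ^ Suc j * frechet_derivative \<phi> (at (t *\<^sub>R x0)) v)"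
      unfolding fx_def cbox_interval
    proof (rule integral_cong)
      fix t :: real assume t: "t \<in> {0..1}"
      have tx: "t *\<^sub>R x0 \<in> U" using seg[OF that t] .
      show "blinfun_apply ((t ^ Suc j) *\<^sub>R Dbl \<phi> (t *\<^sub>R x0)) v = t ^ Suc j * frechet_derivative \<phi> (at (t *\<^sub>R x0)) v"
        by (simp only: blinfun.scaleR_left Dbl_apply[OF dat[OF tx]] real_scaleR_def)
    qed
    finally show ?thesis by (simp add: Gi_def)
  qed
  have "Ck_on k U (\<lambda>x. frechet_derivative (Gi j \<phi>) (at x) v)" if "v \<in> Basis" for v
  proof -
    have "Ck_on k U (Gi (Suc j) (\<lambda>y. frechet_derivative \<phi> (at y) v))"
      using Suc.IH pk[OF that] by blast
    moreover have "Ck_on k U (\<lambda>x. frechet_derivative (Gi j \<phi>) (at x) v) = Ck_on k U (Gi (Suc j) (\<lambda>y. frechet_derivative \<phi> (at y) v))"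
      by (rule Ck_on_open_cong[OF U_open]) (use fdG in auto)
    ultimately show ?thesis by simp
  qed
  moreover have "Gi j \<phi> differentiable_on U"
    using hd unfolding differentiable_on_def differentiable_def
    by (meson has_derivative_at_withinI)
  ultimately show ?case by simp
qed

end



context starU begin

lemma Gi_smooth: "smooth_on U \<phi> \<Longrightarrow> smooth_on U (Gi j \<phi>)"
  unfolding smooth_on_def using Gi_Ck by blast

lemma hadamard:
  assumes h: "smooth_on U h" and x: "x \<in> U"
  shows "h x - h 0 = (\<Sum>i\<in>Basis. (x \<bullet> i) * Gi 0 (\<lambda>y. frechet_derivative h (at y) i) x)"
proof -
  have dat: "h differentiable (at y)" if "y \<in> U" for y
    using smooth_on_differentiable[OF h] that U_open by (simp add: differentiable_on_eq_differentiable_at)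
  have pc: "continuous_on U (\<lambda>y. frechet_derivative h (at y) i)" if "i \<in> Basis" for i
    using smooth_on_continuous[OF smooth_on_deriv[OF h that]] .
  have vd: "((\<lambda>t. h (t *\<^sub>R x)) has_vector_derivative frechet_derivative h (at (t *\<^sub>R x)) x) (at t within {0..1})"
    if "t \<in> {0..1}" for t
  proof -
    have tx: "t *\<^sub>R x \<in> U" using seg[OF x that] .
    have dpa: "(h has_derivative frechet_derivative h (at (t *\<^sub>R x))) (at (t *\<^sub>R x))"
      using dat[OF tx] frechet_derivative_works by blast
    have lin: "linear (frechet_derivative h (at (t *\<^sub>R x)))"
      using dpa has_derivative_linear by blast
    have hs: "((\<lambda>t. t *\<^sub>R x) has_derivative (\<lambda>s. s *\<^sub>R x)) (at t)"
      by (rule bounded_linear_imp_has_derivative[OF bounded_linear_scaleR_left])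
    have "((\<lambda>t. h (t *\<^sub>R x)) has_derivative (\<lambda>s. frechet_derivative h (at (t *\<^sub>R x)) (s *\<^sub>R x))) (at t)"
      using has_derivative_compose[OF hs dpa] .
    moreover have "(\<lambda>s. frechet_derivative h (at (t *\<^sub>R x)) (s *\<^sub>R x)) = (\<lambda>s. s *\<^sub>R frechet_derivative h (at (t *\<^sub>R x)) x)"
      using linear_scale[OF lin] by auto
    ultimately show ?thesis unfolding has_vector_derivative_def
      by (simp add: has_derivative_at_withinI)
  qed
  have "((\<lambda>t. frechet_derivative h (at (t *\<^sub>R x)) x) has_integral (h (1 *\<^sub>R x) - h (0 *\<^sub>R x))) {0..1}"
    by (rule fundamental_theorem_of_calculus) (use vd in auto)
  then have "h x - h 0 = integral {0..1} (\<lambda>t. frechet_derivative h (at (t *\<^sub>R x)) x)"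
    by (simp add: integral_unique)
  also have "\<dots> = integral {0..1} (\<lambda>t. \<Sum>i\<in>Basis. (x \<bullet> i) * frechet_derivative h (at (t *\<^sub>R x)) i)"
  proof (rule integral_cong)
    fix t assume "t \<in> {0..1::real}"
    then have tx: "t *\<^sub>R x \<in> U" using seg[OF x] by blast
    have lin: "linear (frechet_derivative h (at (t *\<^sub>R x)))"
      using dat[OF tx] frechet_derivative_works has_derivative_linear by blast
    show "frechet_derivative h (at (t *\<^sub>R x)) x = (\<Sum>i\<in>Basis. (x \<bullet> i) * frechet_derivative h (at (t *\<^sub>R x)) i)"
      using Linear_Algebra.linear_componentwise[OF lin, of x 1] by simp
  qed
  also have "\<dots> = (\<Sum>i\<in>Basis. integral {0..1} (\<lambda>t. (x \<bullet> i) * frechet_derivative h (at (t *\<^sub>R x)) i))"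
  proof (rule integral_sum)
    show "finite (Basis::'a set)" by simp
    fix i :: 'a assume i: "i \<in> Basis"
    have "continuous_on {0..1} (\<lambda>t. frechet_derivative h (at (t *\<^sub>R x)) i)"
      by (rule continuous_on_compose2[OF pc[OF i]]) (auto intro!: continuous_intros simp: seg[OF x])
    then show "(\<lambda>t. (x \<bullet> i) * frechet_derivative h (at (t *\<^sub>R x)) i) integrable_on {0..1}"
      by (intro integrable_continuous_real continuous_intros)
  qed
  also have "\<dots> = (\<Sum>i\<in>Basis. (x \<bullet> i) * Gi 0 (\<lambda>y. frechet_derivative h (at y) i) x)"
    by (simp add: Gi_def)
  finally show ?thesis .
qed

end



fun Jm :: "'a::euclidean_space set \<Rightarrow> nat \<Rightarrow> ('a \<Rightarrow> real) \<Rightarrow> bool" where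
  "Jm U 0 f = smooth_on U f"
| "Jm U (Suc m) f = (\<exists>h. (\<forall>i\<in>Basis. Jm U m (h i)) \<and> (\<forall>x\<in>U. f x = (\<Sum>i\<in>Basis. (x \<bullet> i) * h i x)))"

lemma inner_bigo_norm: "(\<lambda>x::'a::euclidean_space. x \<bullet> i) \<in> O[F](\<lambda>x. norm x)" if "i \<in> Basis"
  by (rule bigoI[of _ 1]) (simp add: Basis_le_norm that)

lemma norm_pow_bigo:
  assumes "e2 \<le> e1"
  shows "(\<lambda>x::'a::real_normed_vector. norm x ^ e1) \<in> O[at 0](\<lambda>x. norm x ^ e2)"
proof (rule bigoI[of _ 1])
  have "eventually (\<lambda>x::'a. dist x 0 < 1) (at 0)"
    by (rule eventually_at_in_open'[of "ball 0 1", simplified dist_commute mem_ball]) auto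
  then show "eventually (\<lambda>x::'a. norm (norm x ^ e1) \<le> 1 * norm (norm x ^ e2)) (at 0)"
  proof eventually_elim
    case (elim x)
    then have "norm x \<le> 1" by simp
    then show ?case using power_decreasing[OF assms, of "norm x"] by simp
  qed
qed

lemma continuous_bigo_1:
  assumes "continuous_on U f" "open U" "(0::'a::real_normed_vector) \<in> U"
  shows "f \<in> O[at 0](\<lambda>x. 1)"
proof (rule bigoI_tendsto[where c = "f 0"])
  have "(f \<longlongrightarrow> f 0) (at 0)"
    using assms continuous_on_eq_continuous_at continuous_at by blast
  then show "((\<lambda>x. f x / 1) \<longlongrightarrow> f 0) (at 0)" by simp
qed simp

context starU begin

lemma ev_U: "eventually (\<lambda>x. x \<in> U) (at 0)"
  by (rule eventually_at_in_open'[OF U_open U_0])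

lemma J_smooth: "Jm U m f \<Longrightarrow> smooth_on U f"
proof (induction m arbitrary: f)
  case (Suc m)
  then obtain h where h: "\<forall>i\<in>Basis. Jm U m (h i)" "\<forall>x\<in>U. f x = (\<Sum>i\<in>Basis. (x \<bullet> i) * h i x)" by auto
  have "smooth_on U (\<lambda>x. \<Sum>i\<in>Basis. (x \<bullet> i) * h i x)"
    using h(1) Suc.IH by (intro smooth_on_sum smooth_on_mult U_open smooth_on_inner) auto
  then show ?case using smooth_on_cong[OF U_open h(2)] by simp
qed simp

lemma J_bigo: "Jm U m f \<Longrightarrow> f \<in> O[at 0](\<lambda>x. norm x ^ m)"
proof (induction m arbitrary: f)
  case 0
  then show ?case using continuous_bigo_1[OF smooth_on_continuous U_open U_0] by simp
next
  case (Suc m)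
  then obtain h where h: "\<forall>i\<in>Basis. Jm U m (h i)" "\<forall>x\<in>U. f x = (\<Sum>i\<in>Basis. (x \<bullet> i) * h i x)" by auto
  have S: "(\<lambda>x. \<Sum>i\<in>Basis. (x \<bullet> i) * h i x) \<in> O[at 0](\<lambda>x. norm x ^ Suc m)"
  proof (rule big_sum_in_bigo)
    fix i :: 'a assume i: "i \<in> Basis"
    have "(\<lambda>x. (x \<bullet> i) * h i x) \<in> O[at 0](\<lambda>x. norm x * norm x ^ m)"
      by (rule landau_o.big.mult[OF inner_bigo_norm[OF i] Suc.IH]) (use h i in auto)
    then show "(\<lambda>x. (x \<bullet> i) * h i x) \<in> O[at 0](\<lambda>x. norm x ^ Suc m)" by simp
  qed
  have ev_eq: "eventually (\<lambda>x. f x = (\<Sum>i\<in>Basis. (x \<bullet> i) * h i x)) (at 0)"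
    using ev_U h(2) by (auto elim: eventually_mono)
  show ?case by (rule iffD2[OF landau_o.big.in_cong[OF ev_eq] S])
qed

lemma J_lead: "Jm U m f \<Longrightarrow> \<exists>P. (\<forall>t x. P (t *\<^sub>R x) = t ^ m * P x) \<and> Jm U (Suc m) (\<lambda>x. f x - P x)"
proof (induction m arbitrary: f)
  case 0
  then have sf: "smooth_on U f" by simp
  have "Jm U (Suc 0) (\<lambda>x. f x - f 0)"
    apply simp
    apply (rule exI[of _ "\<lambda>i. Gi 0 (\<lambda>y. frechet_derivative f (at y) i)"])
    using hadamard[OF sf] Gi_smooth[OF smooth_on_deriv[OF sf]] by auto
  then show ?case by (intro exI[of _ "\<lambda>x. f 0"]) simp
next
  case (Suc m)
  then obtain h where h: "\<forall>i\<in>Basis. Jm U m (h i)" "\<forall>x\<in>U. f x = (\<Sum>i\<in>Basis. (x \<bullet> i) * h i x)" by auto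
  have "\<forall>i\<in>Basis. \<exists>P. (\<forall>t x. P (t *\<^sub>R x) = t ^ m * P x) \<and> Jm U (Suc m) (\<lambda>x. h i x - P x)"
    using h(1) Suc.IH by blast
  then obtain Pf where Pf: "\<forall>i\<in>Basis. (\<forall>t x. Pf i (t *\<^sub>R x) = t ^ m * Pf i x) \<and> Jm U (Suc m) (\<lambda>x. h i x - Pf i x)"
    by metis
  define P where "P x = (\<Sum>i\<in>Basis. (x \<bullet> i) * Pf i x)" for x
  have hom: "P (t *\<^sub>R x) = t ^ Suc m * P x" for t x
    unfolding P_def sum_distrib_left using Pf by (intro sum.cong) (auto simp: algebra_simps)
  have jm: "Jm U (Suc (Suc m)) (\<lambda>x. f x - P x)"
  proof -
    have "\<forall>x\<in>U. f x - P x = (\<Sum>i\<in>Basis. (x \<bullet> i) * (h i x - Pf i x))"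
      using h(2) by (simp add: P_def right_diff_distrib sum_subtractf)
    moreover have "\<forall>i\<in>Basis. Jm U (Suc m) (\<lambda>x. h i x - Pf i x)" using Pf by blast
    ultimately show ?thesis
      apply (simp only: Jm.simps(2)[of U "Suc m"])
      apply (rule exI[of _ "\<lambda>i x. h i x - Pf i x"])
      apply (rule conjI)
      by assumption+
  qed
  show ?case
    apply (rule exI[of _ P])
    apply (rule conjI)
    using hom apply blast
    by (rule jm)
qed

end

lemma hom_zero:
  fixes P :: "'a::euclidean_space \<Rightarrow> real"
  assumes hom: "\<forall>t x. P (t *\<^sub>R x) = t ^ m * P x"
    and big: "P \<in> O[at 0](\<lambda>x. norm x ^ Suc m)"
  shows "P y = 0"
proof -
  obtain c where c: "c > 0" "eventually (\<lambda>x. norm (P x) \<le> c * norm (norm x ^ Suc m)) (at 0)"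
    using big by (elim landau_o.bigE)
  then obtain d where d: "d > 0" "\<forall>x. x \<noteq> 0 \<and> dist x 0 < d \<longrightarrow> norm (P x) \<le> c * norm (norm x ^ Suc m)"
    unfolding eventually_at by auto
  have nz: "P y = 0" if y: "y \<noteq> 0" for y
  proof -
    have ev: "eventually (\<lambda>t. \<bar>P y\<bar> \<le> c * t * norm y ^ Suc m) (at_right 0)"
      unfolding eventually_at_right_field
    proof (intro exI[of _ "d / norm y"] conjI allI impI)
      show "0 < d / norm y" using d y by simp
      fix t :: real assume t: "0 < t" "t < d / norm y"
      have "t * norm y < d" using t y by (simp add: field_simps)
      have nz: "t *\<^sub>R y \<noteq> 0" using t y by simp
      have nd: "dist (t *\<^sub>R y) 0 < d" using \<open>t * norm y < d\<close> t by simp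
      have "norm (P (t *\<^sub>R y)) \<le> c * norm (norm (t *\<^sub>R y) ^ Suc m)"
        using d(2) nz nd by blast
      moreover have "norm (P (t *\<^sub>R y)) = t ^ m * \<bar>P y\<bar>"
        using hom t by (simp add: abs_mult)
      moreover have "norm (norm (t *\<^sub>R y) ^ Suc m) = (t * norm y) ^ Suc m"
        using t by (simp add: abs_of_pos)
      ultimately have "t ^ m * \<bar>P y\<bar> \<le> c * (t * norm y) ^ Suc m" by (simp only:)
      then have "t ^ m * \<bar>P y\<bar> \<le> t ^ m * (c * t * norm y ^ Suc m)"
        by (simp add: power_mult_distrib algebra_simps)
      then show "\<bar>P y\<bar> \<le> c * t * norm y ^ Suc m"
        using t by (simp add: mult_le_cancel_left_pos)
    qed
    have "((\<lambda>t. c * t * norm y ^ Suc m) \<longlongrightarrow> c * 0 * norm y ^ Suc m) (at_right 0)"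
      by (intro tendsto_intros)
    then have lim: "((\<lambda>t. c * t * norm y ^ Suc m) \<longlongrightarrow> 0) (at_right 0)" by simp
    have "\<bar>P y\<bar> \<le> 0"
      by (rule tendsto_le[OF trivial_limit_at_right_real lim tendsto_const ev])
    then show ?thesis by simp
  qed
  show ?thesis
  proof (cases "y = 0")
    case True
    obtain b :: 'a where b: "b \<in> Basis" using nonempty_Basis by blast
    then have "b \<noteq> 0" by auto
    then have "P b = 0" using nz by blast
    then show ?thesis using hom True by (metis mult_zero_right scaleR_zero_left)
  qed (use nz in auto)
qed

context starU begin

lemma J_main: "smooth_on U f \<Longrightarrow> f \<in> O[at 0](\<lambda>x. norm x ^ m) \<Longrightarrow> Jm U m f"
proof (induction m arbitrary: f)
  case (Suc m)
  have "f \<in> O[at 0](\<lambda>x. norm x ^ m)"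
    using landau_o.big_trans[OF Suc.prems(2) norm_pow_bigo[of m "Suc m"]] by simp
  then have "Jm U m f" using Suc by blast
  then obtain P where P: "\<forall>t x. P (t *\<^sub>R x) = t ^ m * P x" "Jm U (Suc m) (\<lambda>x. f x - P x)"
    using J_lead by blast
  have "(\<lambda>x. f x - (f x - P x)) \<in> O[at 0](\<lambda>x. norm x ^ Suc m)"
    by (rule sum_in_bigo(2)[OF Suc.prems(2) J_bigo[OF P(2)]])
  then have "\<forall>y. P y = 0" using hom_zero[OF P(1)] by simp
  then show ?case using P(2) by simp
qed simp

end



definition ev :: "nat \<Rightarrow> nat \<Rightarrow> nat" where "ev a = (\<lambda>b. if b = a then 1 else 0)"

lemma sum_single:
  assumes "finite A" "a \<in> A" "\<And>b. b \<in> A \<Longrightarrow> b \<noteq> a \<Longrightarrow> f b = 0"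
  shows "sum f A = f a"
proof -
  have "sum f A = f a + sum f (A - {a})" using assms by (simp add: sum.remove)
  also have "sum f (A - {a}) = 0" using assms by (intro sum.neutral) auto
  finally show ?thesis by simp
qed

lemma fin_le:
  fixes q :: nat and lam :: "nat \<Rightarrow> nat"
  assumes "\<forall>a. q \<le> a \<longrightarrow> lam a = (0::nat)"
  shows "finite {mu. \<forall>a. mu a \<le> lam a}"
proof -
  have "{mu. \<forall>a. mu a \<le> lam a} \<subseteq> (\<lambda>g a. if a < q then g a else 0) ` (PiE {..<q} (\<lambda>a. {..lam a}))"
  proof
    fix mu assume mu: "mu \<in> {mu. \<forall>a. mu a \<le> lam a}"
    have "restrict mu {..<q} \<in> PiE {..<q} (\<lambda>a. {..lam a})" using mu by auto
    moreover have "mu = (\<lambda>a. if a < q then restrict mu {..<q} a else 0)"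
      using mu assms apply (auto simp: fun_eq_iff)
      subgoal for a by (drule spec[of _ a], drule spec[of _ a]) simp
      done
    ultimately show "mu \<in> (\<lambda>g a. if a < q then g a else 0) ` (PiE {..<q} (\<lambda>a. {..lam a}))" by blast
  qed
  moreover have "finite (PiE {..<q} (\<lambda>a. {..lam a}))" by (intro finite_PiE) auto
  ultimately show ?thesis using finite_subset by blast
qed

context
  fixes n q :: nat and dg :: "nat \<Rightarrow> nat \<Rightarrow> bool"
begin

lemma admissible_zero: "admissible n q dg (\<lambda>_. 0)"
  by (simp add: admissible_def)

lemma admissible_fin: "admissible n q dg lam \<Longrightarrow> finite {mu. \<forall>a. mu a \<le> lam a}"
  by (rule fin_le[of q]) (simp add: admissible_def)

lemma admissible_ev: "a < q \<Longrightarrow> admissible n q dg (ev a)"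
  by (simp add: admissible_def ev_def)

lemma mono_sign_zero_left: "mono_sign n q dg (\<lambda>_. 0) nu = 1"
  by (simp add: mono_sign_def)

lemma mono_sign_zero_right: "mono_sign n q dg mu (\<lambda>_. 0) = 1"
  by (simp add: mono_sign_def)

lemma mono_sign_ev:
  assumes "\<forall>b<a. nu b = 0"
  shows "mono_sign n q dg (ev a) nu = 1"
proof -
  have s: "(\<Sum>a'<q. \<Sum>b<a'. ev a a' * nu b * pairing n (dg a') (dg b)) = 0"
    using assms by (intro sum.neutral ballI) (auto simp: ev_def)
  show ?thesis unfolding mono_sign_def s by simp
qed

lemma s_mult_one:
  assumes "\<forall>mu. \<not> admissible n q dg mu \<longrightarrow> F mu = (\<lambda>_. 0)"
  shows "s_mult n q dg F s_one lam x = F lam x"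
proof (cases "admissible n q dg lam")
  case True
  have "s_mult n q dg F s_one lam x = mono_sign n q dg lam (\<lambda>a. lam a - lam a) * F lam x * s_one (\<lambda>a. lam a - lam a) x"
    unfolding s_mult_def using True
    by (simp only: if_True, intro sum_single admissible_fin)
       (auto simp: s_one_def fun_eq_iff intro: le_antisym)
  then show ?thesis by (simp add: mono_sign_zero_right s_one_def)
next
  case False
  then show ?thesis using assms by (simp add: s_mult_def)
qed

definition Xs :: "'a::euclidean_space \<Rightarrow> 'a series" where
  "Xs i = (\<lambda>mu x. if mu = (\<lambda>_. 0) then x \<bullet> i else 0)"

definition Xi :: "nat \<Rightarrow> 'a::euclidean_space series" where
  "Xi a = (\<lambda>mu x. if mu = ev a then 1 else 0)"

lemma s_mult_Xs:
  "s_mult n q dg (Xs i) G lam x = (if admissible n q dg lam then (x \<bullet> i) * G lam x else 0)"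
proof (cases "admissible n q dg lam")
  case True
  have "s_mult n q dg (Xs i) G lam x = mono_sign n q dg (\<lambda>_. 0) (\<lambda>a. lam a - 0) * Xs i (\<lambda>_. 0) x * G (\<lambda>a. lam a - 0) x"
    unfolding s_mult_def using True
    by (simp only: if_True, intro sum_single admissible_fin) (auto simp: Xs_def)
  then show ?thesis using True by (simp add: mono_sign_zero_left Xs_def)
qed (simp add: s_mult_def)

lemma s_mult_Xi:
  "s_mult n q dg (Xi a) G lam x = (if admissible n q dg lam \<and> 1 \<le> lam a then
      mono_sign n q dg (ev a) (\<lambda>b. lam b - ev a b) * G (\<lambda>b. lam b - ev a b) x else 0)"
proof (cases "admissible n q dg lam")
  case True
  show ?thesis
  proof (cases "1 \<le> lam a")
    case True2: True
    have "s_mult n q dg (Xi a) G lam x = mono_sign n q dg (ev a) (\<lambda>b. lam b - ev a b) * Xi a (ev a) x * G (\<lambda>b. lam b - ev a b) x"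
      unfolding s_mult_def using True True2
      by (simp only: if_True, intro sum_single admissible_fin) (auto simp: Xi_def ev_def)
    then show ?thesis using True True2 by (simp add: Xi_def)
  next
    case False
    have "s_mult n q dg (Xi a) G lam x = 0"
      unfolding s_mult_def using True False
      by (simp only: if_True, intro sum.neutral) (auto simp: Xi_def ev_def)
    then show ?thesis using False by simp
  qed
qed (simp add: s_mult_def)

lemma s_mult_add: "s_mult n q dg Y (s_add A B) = s_add (s_mult n q dg Y A) (s_mult n q dg Y B)"
  by (auto simp: fun_eq_iff s_mult_def s_add_def sum.distrib[symmetric] algebra_simps)

lemma s_mult_zero: "s_mult n q dg Y s_zero = s_zero"
  by (auto simp: fun_eq_iff s_mult_def s_zero_def)

lemma s_mult_cong:
  assumes "\<forall>nu. A nu x = B nu x"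
  shows "s_mult n q dg Y A lam x = s_mult n q dg Y B lam x"
  using assms by (simp add: s_mult_def)

lemma sum_cons:
  "s_sum_list (map (s_prod_list n q dg) (map (Cons Y) L)) = s_mult n q dg Y (s_sum_list (map (s_prod_list n q dg) L))"
  by (induction L) (simp_all add: s_sum_list_def s_prod_list_def s_mult_zero s_mult_add)

lemma sum_append: "s_sum_list (L1 @ L2) lam x = s_sum_list L1 lam x + s_sum_list L2 lam x"
  by (induction L1) (simp_all add: s_sum_list_def s_add_def s_zero_def)

lemma sum_concat: "s_sum_list (concat (map g is)) lam x = (\<Sum>i\<leftarrow>is. s_sum_list (g i) lam x)"
proof (induction "is")
  case Nil
  then show ?case by (simp add: s_sum_list_def s_zero_def)
next
  case (Cons a "is")
  then show ?case by (simp add: sum_append)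
qed

end



definition cond :: "nat \<Rightarrow> nat \<Rightarrow> (nat \<Rightarrow> nat \<Rightarrow> bool) \<Rightarrow> nat \<Rightarrow> 'a::euclidean_space series \<Rightarrow> bool" where
  "cond n q dg k F \<longleftrightarrow> (\<forall>mu. admissible n q dg mu \<longrightarrow> mi_size q mu \<le> k \<longrightarrow>
       F mu \<in> O[at 0](\<lambda>x. norm x ^ (k - mi_size q mu + 1)))"

definition IMP :: "nat \<Rightarrow> nat \<Rightarrow> (nat \<Rightarrow> nat \<Rightarrow> bool) \<Rightarrow> 'a::euclidean_space set \<Rightarrow> nat \<Rightarrow> 'a series \<Rightarrow> bool" where
  "IMP n q dg W k F \<longleftrightarrow> (\<exists>L.
        (\<forall>l\<in>set L. length l = Suc k \<and> (\<forall>G\<in>set l. is_section n q dg W G \<and> in_max_ideal G)) \<and>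
        (\<forall>mu. \<forall>x\<in>W. F mu x = s_sum_list (map (s_prod_list n q dg) L) mu x))"

lemma mi_size_add_ev: "a < q \<Longrightarrow> mi_size q (\<lambda>b. nu b + ev a b) = Suc (mi_size q nu)"
  by (simp add: mi_size_def sum.distrib ev_def)

lemma admissible_sub_ev:
  assumes "admissible n q dg (\<lambda>b. nu b + ev a b)" "a < q"
  shows "admissible n q dg nu"
proof -
  have "nu b \<le> nu b + ev a b" for b by simp
  then show ?thesis using assms unfolding admissible_def ev_def
    by (metis (no_types, lifting) add_is_0 le_trans not_le)
qed

lemma mi_size_zero: "mi_size q (\<lambda>_. 0) = 0" by (simp add: mi_size_def)

lemma decomp_eq:
  fixes F :: "'a::euclidean_space series"
  assumes sec: "\<forall>mu. \<not> admissible n q dg mu \<longrightarrow> F mu = (\<lambda>_. 0)"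
    and F0: "F (\<lambda>_. 0) x = (\<Sum>i\<in>Basis. (x \<bullet> i) * h i x)"
  defines "G \<equiv> \<lambda>i mu x. if mu = (\<lambda>_. 0) then h i x else 0"
    and "H \<equiv> \<lambda>a nu x. if (\<forall>b<a. nu b = 0) \<and> admissible n q dg (\<lambda>b. nu b + ev a b) then F (\<lambda>b. nu b + ev a b) x else 0"
  shows "(\<Sum>i\<in>Basis. s_mult n q dg (Xs i) (G i) lam x) + (\<Sum>a\<in>{0..<q}. s_mult n q dg (Xi a) (H a) lam x) = F lam x"
proof (cases "admissible n q dg lam")
  case False
  then show ?thesis using sec by (simp add: s_mult_Xs s_mult_Xi)
next
  case adm: True
  have s1: "(\<Sum>i\<in>Basis. s_mult n q dg (Xs i) (G i) lam x) = (if lam = (\<lambda>_. 0) then F lam x else 0)"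
    using adm F0 by (simp add: s_mult_Xs G_def)
  have tm: "s_mult n q dg (Xi a) (H a) lam x = (if 1 \<le> lam a \<and> (\<forall>b<a. lam b = 0) then F lam x else 0)" for a
  proof (cases "1 \<le> lam a")
    case True
    define nu where "nu = (\<lambda>b. lam b - ev a b)"
    have nul: "(\<lambda>b. nu b + ev a b) = lam" using True by (auto simp: nu_def ev_def fun_eq_iff)
    have nul': "(\<lambda>b. lam b - ev a b + ev a b) = lam" using nul by (simp add: nu_def)
    have nub: "\<And>b. b < a \<Longrightarrow> nu b = lam b" by (simp add: nu_def ev_def)
    show ?thesis
    proof (cases "\<forall>b<a. lam b = 0")
      case True2: True
      have ms: "mono_sign n q dg (ev a) nu = 1" using True2 nub by (intro mono_sign_ev) auto
      have "H a nu x = F lam x" using True2 nub nul adm unfolding H_def by auto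
      then show ?thesis using True True2 adm ms
        by (simp add: s_mult_Xi nu_def)
    next
      case False
      have "H a nu x = 0" using False nub unfolding H_def by auto
      then show ?thesis using True adm False
        by (auto simp: s_mult_Xi nu_def)
    qed
  next
    case False
    then show ?thesis by (simp add: s_mult_Xi)
  qed
  show ?thesis
  proof (cases "lam = (\<lambda>_. 0)")
    case True
    then show ?thesis using s1 tm by simp
  next
    case False
    then obtain c where c: "lam c \<noteq> 0" by auto
    define a0 where "a0 = (LEAST a. lam a \<noteq> 0)"
    have a0: "lam a0 \<noteq> 0" using c unfolding a0_def by (rule LeastI)
    have lt: "\<And>b. b < a0 \<Longrightarrow> lam b = 0" unfolding a0_def using not_less_Least by blast
    have "a0 < q" using a0 adm unfolding admissible_def by (meson not_le)
    have "(\<Sum>a\<in>{0..<q}. s_mult n q dg (Xi a) (H a) lam x) = (if 1 \<le> lam a0 \<and> (\<forall>b<a0. lam b = 0) then F lam x else 0)"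
      unfolding tm
    proof (rule sum_single)
      show "finite {0..<q}" by simp
      show "a0 \<in> {0..<q}" using \<open>a0 < q\<close> by simp
      fix b assume "b \<in> {0..<q}" "b \<noteq> a0"
      then consider "b < a0" | "a0 < b" by linarith
      then show "(if 1 \<le> lam b \<and> (\<forall>c<b. lam c = 0) then F lam x else 0) = 0"
        by cases (use lt a0 in auto)
    qed
    also have "\<dots> = F lam x" using a0 lt by simp
    finally show ?thesis using s1 False by simp
  qed
qed

lemma sum_cons':
  "s_sum_list (map (\<lambda>l. s_prod_list n q dg (Y # l)) L) = s_mult n q dg Y (s_sum_list (map (s_prod_list n q dg) L))"
  using sum_cons[of n q dg Y L] by (simp add: o_def)

lemma smooth_on_if_const: "smooth_on U f \<Longrightarrow> smooth_on U g \<Longrightarrow> smooth_on U (\<lambda>x. if P then f x else g x)"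
  by (cases P) simp_all

context starU begin

lemma Jm1_vanish: "smooth_on U f \<Longrightarrow> Jm U (Suc 0) (\<lambda>x. f x - f 0)"
  apply simp
  apply (rule exI[of _ "\<lambda>i. Gi 0 (\<lambda>y. frechet_derivative f (at y) i)"])
  using hadamard Gi_smooth[OF smooth_on_deriv] by auto

lemma rev_main:
  "is_section n q dg U F \<Longrightarrow> cond n q dg k F \<Longrightarrow> IMP n q dg U k F"
proof (induction k arbitrary: F)
  case 0
  have sF: "smooth_on U (F (\<lambda>_. 0))" using 0 by (simp add: is_section_def)
  have "F (\<lambda>_. 0) \<in> O[at 0](\<lambda>x. norm x ^ Suc 0)"
    using 0(2) admissible_zero[of n q dg] by (simp add: cond_def mi_size_zero)
  then have "Jm U (Suc 0) (F (\<lambda>_. 0))" using J_main sF by blast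
  then have "F (\<lambda>_. 0) 0 = 0" using U_0 by auto
  then have mi: "in_max_ideal F" by (simp add: in_max_ideal_def)
  have eq: "F mu x = s_sum_list (map (s_prod_list n q dg) [[F]]) mu x" for mu x
    using s_mult_one[of n q dg F mu x] 0(1)
    by (simp add: s_sum_list_def s_prod_list_def s_add_def s_zero_def is_section_def)
  have "\<forall>l\<in>set [[F]]. length l = Suc 0 \<and> (\<forall>G\<in>set l. is_section n q dg U G \<and> in_max_ideal G)"
    using 0(1) mi by simp
  then show ?case unfolding IMP_def using eq by blast
next
  case (Suc k)
  note sec = Suc.prems(1) and cnd = Suc.prems(2)
  have sF0: "smooth_on U (F (\<lambda>_. 0))" using sec by (simp add: is_section_def)
  have h0: "admissible n q dg (\<lambda>_. 0)" "mi_size q (\<lambda>_. 0) \<le> Suc k"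
    using admissible_zero[of n q dg] by (auto simp: mi_size_zero)
  have "F (\<lambda>_. 0) \<in> O[at 0](\<lambda>x. norm x ^ (Suc k - mi_size q (\<lambda>_. 0) + 1))"
    by (rule cnd[unfolded cond_def, rule_format, OF h0])
  moreover have "Suc k - mi_size q (\<lambda>_. 0) + 1 = Suc (Suc k)" by (simp add: mi_size_zero)
  ultimately have "F (\<lambda>_. 0) \<in> O[at 0](\<lambda>x. norm x ^ Suc (Suc k))" by simp
  then have "Jm U (Suc (Suc k)) (F (\<lambda>_. 0))" using J_main sF0 by blast
  then obtain h where h: "\<forall>i\<in>Basis. Jm U (Suc k) (h i)" "\<forall>x\<in>U. F (\<lambda>_. 0) x = (\<Sum>i\<in>Basis. (x \<bullet> i) * h i x)"
    by auto
  define G where "G \<equiv> \<lambda>(i::'a) (mu::nat\<Rightarrow>nat) (x::'a). if mu = (\<lambda>_. 0) then h i x else (0::real)"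
  define H where "H \<equiv> \<lambda>a nu x. if (\<forall>b<a. nu b = 0) \<and> admissible n q dg (\<lambda>b. nu b + ev a b) then F (\<lambda>b. nu b + ev a b) x else 0"
  have "IMP n q dg U k (G i)" if i: "i \<in> Basis" for i
  proof (rule Suc.IH)
    have hs: "smooth_on U (h i)" using J_smooth h(1) i by blast
    show "is_section n q dg U (G i)"
      unfolding is_section_def
    proof (intro conjI allI impI)
      fix mu show "smooth_on U (G i mu)"
        by (cases "mu = (\<lambda>_. 0)") (simp_all add: G_def hs smooth_on_const)
    next
      fix mu assume "\<not> admissible n q dg mu"
      then show "G i mu = (\<lambda>_. 0)" using admissible_zero[of n q dg] by (auto simp: G_def)
    qed
    have "h i \<in> O[at 0](\<lambda>x. norm x ^ Suc k)" using J_bigo h(1) i by blast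
    then show "cond n q dg k (G i)"
      unfolding cond_def
    proof (intro allI impI)
      fix mu assume "h i \<in> O[at 0](\<lambda>x. norm x ^ Suc k)"
      then show "G i mu \<in> O[at 0](\<lambda>x. norm x ^ (k - mi_size q mu + 1))"
        by (cases "mu = (\<lambda>_. 0)") (simp_all add: G_def mi_size_zero)
    qed
  qed
  then have "\<forall>i\<in>Basis. \<exists>L. (\<forall>l\<in>set L. length l = Suc k \<and> (\<forall>G\<in>set l. is_section n q dg U G \<and> in_max_ideal G)) \<and>
        (\<forall>mu. \<forall>x\<in>U. G i mu x = s_sum_list (map (s_prod_list n q dg) L) mu x)"
    unfolding IMP_def by blast
  then obtain LG where LG: "\<forall>i\<in>Basis. (\<forall>l\<in>set (LG i). length l = Suc k \<and> (\<forall>G\<in>set l. is_section n q dg U G \<and> in_max_ideal G)) \<and>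
        (\<forall>mu. \<forall>x\<in>U. G i mu x = s_sum_list (map (s_prod_list n q dg) (LG i)) mu x)"
    by metis
  have "IMP n q dg U k (H a)" if a: "a < q" for a
  proof (rule Suc.IH)
    show "is_section n q dg U (H a)"
      unfolding is_section_def
    proof (intro conjI allI impI)
      fix nu show "smooth_on U (H a nu)"
      proof (cases "(\<forall>b<a. nu b = 0) \<and> admissible n q dg (\<lambda>b. nu b + ev a b)")
        case True
        have "H a nu = (\<lambda>x. F (\<lambda>b. nu b + ev a b) x)" unfolding H_def by (rule ext, rule if_P[OF True])
        then show ?thesis using sec by (simp add: is_section_def)
      next
        case False
        have "H a nu = (\<lambda>x. 0)" unfolding H_def by (rule ext, rule if_not_P[OF False])
        then show ?thesis by (simp add: smooth_on_const)
      qed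
    next
      fix nu assume "\<not> admissible n q dg nu"
      then have "\<not> admissible n q dg (\<lambda>b. nu b + ev a b)" using admissible_sub_ev[OF _ a] by blast
      then show "H a nu = (\<lambda>_. 0)" unfolding H_def by (intro ext) simp
    qed
    show "cond n q dg k (H a)"
      unfolding cond_def
    proof (intro allI impI)
      fix nu assume nu: "admissible n q dg nu" "mi_size q nu \<le> k"
      show "H a nu \<in> O[at 0](\<lambda>x. norm x ^ (k - mi_size q nu + 1))"
      proof (cases "(\<forall>b<a. nu b = 0) \<and> admissible n q dg (\<lambda>b. nu b + ev a b)")
        case True
        have "F (\<lambda>b. nu b + ev a b) \<in> O[at 0](\<lambda>x. norm x ^ (Suc k - mi_size q (\<lambda>b. nu b + ev a b) + 1))"
          using cnd True nu mi_size_add_ev[OF a] unfolding cond_def by auto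
        moreover have "H a nu = (\<lambda>x. F (\<lambda>b. nu b + ev a b) x)" unfolding H_def by (rule ext, rule if_P[OF True])
        ultimately show ?thesis using mi_size_add_ev[OF a, of nu] nu by simp
      next
        case False
        have "H a nu = (\<lambda>x. 0)" unfolding H_def by (rule ext, rule if_not_P[OF False])
        then show ?thesis by simp
      qed
    qed
  qed
  then have "\<forall>a\<in>{0..<q}. \<exists>L. (\<forall>l\<in>set L. length l = Suc k \<and> (\<forall>G\<in>set l. is_section n q dg U G \<and> in_max_ideal G)) \<and>
        (\<forall>mu. \<forall>x\<in>U. H a mu x = s_sum_list (map (s_prod_list n q dg) L) mu x)"
    unfolding IMP_def by auto
  then obtain LH where LH: "\<forall>a\<in>{0..<q}. (\<forall>l\<in>set (LH a). length l = Suc k \<and> (\<forall>G\<in>set l. is_section n q dg U G \<and> in_max_ideal G)) \<and>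
        (\<forall>mu. \<forall>x\<in>U. H a mu x = s_sum_list (map (s_prod_list n q dg) (LH a)) mu x)"
    by metis
  obtain bl where bl: "set bl = (Basis::'a set)" "distinct bl"
    using finite_distinct_list[OF finite_Basis] by blast
  define L where "L = concat (map (\<lambda>i. map (Cons (Xs i)) (LG i)) bl) @ concat (map (\<lambda>a. map (Cons (Xi a)) (LH a)) [0..<q])"
  have secX: "is_section n q dg U (Xs i) \<and> in_max_ideal (Xs i)" for i :: 'a
    unfolding is_section_def in_max_ideal_def Xs_def using admissible_zero[of n q dg]
    by (auto simp: smooth_on_const smooth_on_inner intro!: smooth_on_if_const)
  have secXi: "is_section n q dg U (Xi a) \<and> in_max_ideal (Xi a)" if "a < q" for a
    unfolding is_section_def in_max_ideal_def
  proof (intro conjI allI impI)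
    fix mu show "smooth_on U (Xi a mu)" by (simp add: Xi_def smooth_on_if_const smooth_on_const)
  next
    fix mu assume "\<not> admissible n q dg mu"
    then have "mu \<noteq> ev a" using admissible_ev[OF that, of n dg] by auto
    then show "Xi a mu = (\<lambda>_. 0)" by (simp add: Xi_def)
  next
    have "(\<lambda>_. 0::nat) \<noteq> ev a"
    proof
      assume "(\<lambda>_. 0::nat) = ev a"
      then have "(0::nat) = ev a a" by (rule fun_cong)
      then show False by (simp add: ev_def)
    qed
    then show "Xi a (\<lambda>_. 0) 0 = 0" by (simp add: Xi_def)
  qed
  have P1: "\<forall>l\<in>set L. length l = Suc (Suc k) \<and> (\<forall>G\<in>set l. is_section n q dg U G \<and> in_max_ideal G)"
  proof -
    have x1: "\<And>a. a < q \<Longrightarrow> is_section n q dg U (Xi a)" and x2: "\<And>a. a < q \<Longrightarrow> in_max_ideal (Xi a)"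
      using secXi by auto
    have x3: "\<And>i::'a. is_section n q dg U (Xs i)" and x4: "\<And>i::'a. in_max_ideal (Xs i)"
      using secX by auto
    show ?thesis unfolding L_def using LG LH bl by (auto simp: x1 x2 x3 x4)
  qed
  have P2: "F lam x = s_sum_list (map (s_prod_list n q dg) L) lam x" if x: "x \<in> U" for lam x
  proof -
    have "s_sum_list (map (s_prod_list n q dg) L) lam x =
       (\<Sum>i\<leftarrow>bl. s_mult n q dg (Xs i) (s_sum_list (map (s_prod_list n q dg) (LG i))) lam x) +
       (\<Sum>a\<leftarrow>[0..<q]. s_mult n q dg (Xi a) (s_sum_list (map (s_prod_list n q dg) (LH a))) lam x)"
      unfolding L_def map_append map_concat by (simp add: sum_append sum_concat o_def sum_cons')
    also have "\<dots> = (\<Sum>i\<leftarrow>bl. s_mult n q dg (Xs i) (G i) lam x) + (\<Sum>a\<leftarrow>[0..<q]. s_mult n q dg (Xi a) (H a) lam x)"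
    proof -
      have "(\<Sum>i\<leftarrow>bl. s_mult n q dg (Xs i) (s_sum_list (map (s_prod_list n q dg) (LG i))) lam x) = (\<Sum>i\<leftarrow>bl. s_mult n q dg (Xs i) (G i) lam x)"
        by (intro arg_cong[where f=sum_list] map_cong refl s_mult_cong) (use LG bl x in auto)
      moreover have "(\<Sum>a\<leftarrow>[0..<q]. s_mult n q dg (Xi a) (s_sum_list (map (s_prod_list n q dg) (LH a))) lam x) = (\<Sum>a\<leftarrow>[0..<q]. s_mult n q dg (Xi a) (H a) lam x)"
        by (intro arg_cong[where f=sum_list] map_cong refl s_mult_cong) (use LH x in auto)
      ultimately show ?thesis by simp
    qed
    also have "\<dots> = (\<Sum>i\<in>Basis. s_mult n q dg (Xs i) (G i) lam x) + (\<Sum>a\<in>{0..<q}. s_mult n q dg (Xi a) (H a) lam x)"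
      using bl by (simp add: sum_list_distinct_conv_sum_set)
    also have "\<dots> = F lam x"
      unfolding G_def H_def by (rule decomp_eq) (use sec h x in \<open>auto simp: is_section_def\<close>)
    finally show ?thesis by simp
  qed
  show ?case unfolding IMP_def using P1 P2 by blast
qed

end



lemma vanish_bigo:
  fixes f :: "'a::euclidean_space \<Rightarrow> real"
  assumes W: "open W" "0 \<in> W" and sf: "smooth_on W f" and f0: "f 0 = 0"
  shows "f \<in> O[at 0](\<lambda>x. norm x ^ Suc 0)"
proof -
  obtain r where r: "r > 0" "ball 0 r \<subseteq> W" using W open_contains_ball by blast
  interpret B: starU "ball (0::'a) r" by unfold_locales (auto simp: r)
  have "smooth_on (ball 0 r) f" using smooth_on_subset[OF _ r(2) sf] by simp
  then have "Jm (ball 0 r) (Suc 0) (\<lambda>x. f x - f 0)" by (rule B.Jm1_vanish)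
  then have "(\<lambda>x. f x - f 0) \<in> O[at 0](\<lambda>x. norm x ^ Suc 0)" by (rule B.J_bigo)
  then show ?thesis using f0 by simp
qed

lemma section_coeff_bigo:
  fixes G :: "'a::euclidean_space series"
  assumes W: "open W" "0 \<in> W" and sec: "is_section n q dg W G" and mi: "in_max_ideal G"
  shows "G mu \<in> O[at 0](\<lambda>x. norm x ^ (if mu = (\<lambda>_. 0) then 1 else 0))"
proof (cases "mu = (\<lambda>_. 0)")
  case True
  have "G mu \<in> O[at 0](\<lambda>x. norm x ^ Suc 0)"
    using vanish_bigo[OF W, of "G mu"] sec mi True by (simp add: is_section_def in_max_ideal_def)
  then show ?thesis using True by simp
next
  case False
  have "G mu \<in> O[at 0](\<lambda>x. 1)"
    using continuous_bigo_1[OF smooth_on_continuous W(1) W(2)] sec by (simp add: is_section_def)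
  then show ?thesis using False by simp
qed

lemma mono_sign_nz: "mono_sign n q dg mu nu \<noteq> 0"
  by (simp add: mono_sign_def)

lemma prod_bigo:
  fixes l :: "'a::euclidean_space series list"
  assumes W: "open W" "0 \<in> W"
    and secs: "\<forall>G\<in>set l. is_section n q dg W G \<and> in_max_ideal G"
  shows "s_prod_list n q dg l lam \<in> O[at 0](\<lambda>x. norm x ^ (length l - mi_size q lam))"
  using secs
proof (induction l arbitrary: lam)
  case Nil
  show ?case by (cases "lam = (\<lambda>_. 0)") (simp_all add: s_prod_list_def s_one_def)
next
  case (Cons G l)
  define P where "P = s_prod_list n q dg l"
  have sG: "is_section n q dg W G" "in_max_ideal G" using Cons.prems by auto
  have IH: "P nu \<in> O[at 0](\<lambda>x. norm x ^ (length l - mi_size q nu))" for nu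
    unfolding P_def using Cons.IH Cons.prems by auto
  have eq: "s_prod_list n q dg (G # l) lam = (\<lambda>x. if admissible n q dg lam then
       (\<Sum>mu\<in>{mu. \<forall>a. mu a \<le> lam a}. mono_sign n q dg mu (\<lambda>a. lam a - mu a) * G mu x * P (\<lambda>a. lam a - mu a) x) else 0)"
    unfolding P_def s_prod_list_def by (simp add: s_mult_def)
  show ?case
  proof (cases "admissible n q dg lam")
    case False
    then show ?thesis unfolding eq by simp
  next
    case adm: True
    have "(\<lambda>x. \<Sum>mu\<in>{mu. \<forall>a. mu a \<le> lam a}. mono_sign n q dg mu (\<lambda>a. lam a - mu a) * G mu x * P (\<lambda>a. lam a - mu a) x)
          \<in> O[at 0](\<lambda>x. norm x ^ (length (G # l) - mi_size q lam))"
    proof (rule big_sum_in_bigo)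
      fix mu assume "mu \<in> {mu. \<forall>a. mu a \<le> lam a}"
      then have le: "\<forall>a. mu a \<le> lam a" by simp
      have lamq: "\<forall>a. q \<le> a \<longrightarrow> lam a = 0" using adm by (simp add: admissible_def)
      define d where "d = (if mu = (\<lambda>_. 0) then 1 else (0::nat))"
      define e where "e = length l - mi_size q (\<lambda>a. lam a - mu a)"
      have A: "G mu \<in> O[at 0](\<lambda>x. norm x ^ d)"
        unfolding d_def by (rule section_coeff_bigo[OF W sG])
      have B: "P (\<lambda>a. lam a - mu a) \<in> O[at 0](\<lambda>x. norm x ^ e)" unfolding e_def by (rule IH)
      have "(\<lambda>x. G mu x * P (\<lambda>a. lam a - mu a) x) \<in> O[at 0](\<lambda>x. norm x ^ d * norm x ^ e)"
        by (rule landau_o.big.mult[OF A B])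
      then have C: "(\<lambda>x. G mu x * P (\<lambda>a. lam a - mu a) x) \<in> O[at 0](\<lambda>x. norm x ^ (d + e))"
        by (simp add: power_add)
      have sub: "mi_size q (\<lambda>a. lam a - mu a) = mi_size q lam - mi_size q mu"
        unfolding mi_size_def using le by (simp add: sum_subtractf_nat)
      have mle: "mi_size q mu \<le> mi_size q lam"
        unfolding mi_size_def using le by (intro sum_mono) auto
      have pos: "1 \<le> mi_size q mu" if "mu \<noteq> (\<lambda>_. 0)"
      proof -
        have "\<exists>a. mu a \<noteq> 0"
        proof (rule ccontr)
          assume "\<not> (\<exists>a. mu a \<noteq> 0)"
          then have "mu = (\<lambda>_. 0)" by auto
          then show False using that by simp
        qed
        then obtain a where a: "mu a \<noteq> 0" by blast
        have "a < q" using a le lamq by (metis le_zero_eq not_le)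
        have "mu a \<le> mi_size q mu" unfolding mi_size_def
          by (rule member_le_sum[of a "{..<q}" mu, simplified]) (use \<open>a < q\<close> in simp)
        then show ?thesis using a by simp
      qed
      have "length (G # l) - mi_size q lam \<le> d + e"
        unfolding d_def e_def sub using pos mle by (cases "mu = (\<lambda>_. 0)") (auto simp: mi_size_zero)
      from landau_o.big_trans[OF C norm_pow_bigo[OF this]]
      have "(\<lambda>x. G mu x * P (\<lambda>a. lam a - mu a) x) \<in> O[at 0](\<lambda>x. norm x ^ (length (G # l) - mi_size q lam))" .
      then have "(\<lambda>x. mono_sign n q dg mu (\<lambda>a. lam a - mu a) * (G mu x * P (\<lambda>a. lam a - mu a) x)) \<in> O[at 0](\<lambda>x. norm x ^ (length (G # l) - mi_size q lam))"
        using mono_sign_nz by simp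
      then show "(\<lambda>x. mono_sign n q dg mu (\<lambda>a. lam a - mu a) * G mu x * P (\<lambda>a. lam a - mu a) x) \<in> O[at 0](\<lambda>x. norm x ^ (length (G # l) - mi_size q lam))"
        by (simp add: mult.assoc)
    qed
    then show ?thesis unfolding eq using adm by simp
  qed
qed

lemma sumlist_bigo:
  assumes "\<forall>l\<in>set L. s_prod_list n q dg l mu \<in> O[at 0](g)"
  shows "s_sum_list (map (s_prod_list n q dg) L) mu \<in> O[at 0](g)"
  using assms
proof (induction L)
  case Nil
  then show ?case by (simp add: s_sum_list_def s_zero_def)
next
  case (Cons l L)
  then have "(\<lambda>x. s_prod_list n q dg l mu x + s_sum_list (map (s_prod_list n q dg) L) mu x) \<in> O[at 0](g)"
    by (intro sum_in_bigo) auto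
  then show ?case by (simp add: s_sum_list_def s_add_def)
qed


theorem lemma3:
  fixes n q :: nat and dg :: "nat \<Rightarrow> nat \<Rightarrow> bool"
    and U V :: "'a::euclidean_space set" and F :: "'a series" and k :: nat
  assumes deg_nonzero: "\<forall>a<q. \<exists>i<n. dg a i"
    and U: "open U" "convex U" "(0::'a) \<in> U"
    and V: "open V" "V \<subseteq> U" "0 \<in> V"
    and F: "is_section n q dg V F"
  shows "in_max_ideal_pow n q dg k F \<longleftrightarrow>
    (\<forall>mu. admissible n q dg mu \<longrightarrow> mi_size q mu \<le> k \<longrightarrow>
       F mu \<in> O[at 0](\<lambda>x. norm x ^ (k - mi_size q mu + 1)))"
proof
  assume "in_max_ideal_pow n q dg k F"
  then obtain W L where W: "open W" "0 \<in> W"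
    and L: "\<forall>l\<in>set L. length l = Suc k \<and> (\<forall>G\<in>set l. is_section n q dg W G \<and> in_max_ideal G)"
    and eq: "\<forall>mu. \<forall>x\<in>W. F mu x = s_sum_list (map (s_prod_list n q dg) L) mu x"
    unfolding in_max_ideal_pow_def by blast
  show "\<forall>mu. admissible n q dg mu \<longrightarrow> mi_size q mu \<le> k \<longrightarrow>
       F mu \<in> O[at 0](\<lambda>x. norm x ^ (k - mi_size q mu + 1))"
  proof (intro allI impI)
    fix mu assume mu: "admissible n q dg mu" "mi_size q mu \<le> k"
    have e: "Suc k - mi_size q mu = k - mi_size q mu + 1" using mu(2) by simp
    have "\<forall>l\<in>set L. s_prod_list n q dg l mu \<in> O[at 0](\<lambda>x. norm x ^ (k - mi_size q mu + 1))"
    proof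
      fix l assume l: "l \<in> set L"
      have "s_prod_list n q dg l mu \<in> O[at 0](\<lambda>x. norm x ^ (length l - mi_size q mu))"
        by (rule prod_bigo[OF W]) (use L l in blast)
      then show "s_prod_list n q dg l mu \<in> O[at 0](\<lambda>x. norm x ^ (k - mi_size q mu + 1))"
        using L l e by simp
    qed
    then have S: "s_sum_list (map (s_prod_list n q dg) L) mu \<in> O[at 0](\<lambda>x. norm x ^ (k - mi_size q mu + 1))"
      by (rule sumlist_bigo)
    have ev: "eventually (\<lambda>x. F mu x = s_sum_list (map (s_prod_list n q dg) L) mu x) (at 0)"
      using eventually_at_in_open'[OF W] eq by (auto elim: eventually_mono)
    show "F mu \<in> O[at 0](\<lambda>x. norm x ^ (k - mi_size q mu + 1))"
      by (rule iffD2[OF landau_o.big.in_cong[OF ev] S])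
  qed
next
  assume c: "\<forall>mu. admissible n q dg mu \<longrightarrow> mi_size q mu \<le> k \<longrightarrow>
       F mu \<in> O[at 0](\<lambda>x. norm x ^ (k - mi_size q mu + 1))"
  obtain r where r: "r > 0" "ball 0 r \<subseteq> V" using V open_contains_ball by blast
  interpret B: starU "ball (0::'a) r" by unfold_locales (auto simp: r)
  have secB: "is_section n q dg (ball 0 r) F"
    using F smooth_on_subset[OF _ r(2)] unfolding is_section_def by auto
  have "IMP n q dg (ball 0 r) k F"
    by (rule B.rev_main[OF secB]) (use c in \<open>simp add: cond_def\<close>)
  then show "in_max_ideal_pow n q dg k F"
    unfolding IMP_def in_max_ideal_pow_def using r(1) by (intro exI[of _ "ball 0 r"]) auto
qed

end
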